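(* Every sequential transduction belongs to $\mathsf{Lex}_1$.
   Context: A sequential transducer over alphabets $\Sigma,\Gamma$ is a deterministic finite automaton $A=(Q,q_0,F,\delta)$ over $\Sigma$ together with an output function $\mu:\mathrm{dom}(\delta)\to\Gamma^*$. The transduction it computes is defined exactly on $L(A)$, mapping $u$ to the concatenation of the outputs $\mu(q,\sigma)$ along the run of $A$ on $u$. A sequential transduction is one computed by a sequential transducer. Alphabets are finite. For words $u,v$ of equal length over alphabets $\Sigma_1,\Sigma_2$, $u\otimes v$ is the word over $\Sigma_1\times\Sigma_2$ with $(u\otimes v)[i]=(u[i],v[i])$. A transduction is a partial function $f:\Sigma^*\rightharpoonup\Gamma^*$. A simple transduction is a transduction $f=\sum_{i=1}^n L_i\triangleright w_i$, where $L_1,\dots,L_n\subseteq\Sigma^*$ are pairwise disjoint regular languages and each $w_i\in\Gamma^{\le 1}$ is a word of length at most 1. It satisfies $f(u)=w_i$ if $u\in L_i$, and $f(u)$ is undefined if $u\notin\bigcup_iL_i$. An ordered alphabet is a pair $\lambda=(B,\prec)$ with $B$ a finite set and $\prec$ a strict linear order on $B$. The order is extended to $B^n$ for each $n$ by: $u\prec v$ iff there is $i\le n$ with $u[i]\prec v[i]$ and $u[j]=v[j]$ for all $i<j\le n$ (most significant letter on the right). For a transduction $f:(\Sigma\times B)^*\rightharpoonup\Gamma^*$, the transduction $\mathsf{maplex}_\lambda f:\Sigma^*\rightharpoonup\Gamma^*$ maps $u$ to $f(u\otimes b_1)f(u\otimes b_2)\cdots f(u\otimes b_m)$, where $b_1\prec\cdots\prec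 b_m$ is the increasing enumeration of all of $B^{|u|}$. It is defined on $u$ iff every $f(u\otimes b_j)$ is defined. $\mathsf{Lex}_1$ is the class of transductions $\mathsf{maplex}_\lambda f$ with $\lambda=(B,\prec)$ an ordered alphabet and $f:(\Sigma\times B)^*\rightharpoonup\Gamma^*$ a simple transduction. *)

theory Defs
  imports Main
begin

definition seq_transducer ::
  "'q set \<Rightarrow> 'q \<Rightarrow> 'q set \<Rightarrow> ('q \<Rightarrow> 'a \<Rightarrow> 'q option) \<Rightarrow> bool" where
  "seq_transducer Q q0 F \<delta> \<longleftrightarrow>
     finite Q \<and> q0 \<in> Q \<and> F \<subseteq> Q \<and>
     (\<forall>q\<in>Q. \<forall>a q'. \<delta> q a = Some q' \<longrightarrow> q' \<in> Q)"

text \<open>The output function mu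
  is only consulted on the domain of delta.\<close>

fun seq_run ::
  "('q \<Rightarrow> 'a \<Rightarrow> 'q option) \<Rightarrow> ('q \<Rightarrow> 'a \<Rightarrow> 'g list) \<Rightarrow> 'q \<Rightarrow> 'a list
     \<Rightarrow> ('q \<times> 'g list) option" where
  "seq_run \<delta> \<mu> q [] = Some (q, [])"
| "seq_run \<delta> \<mu> q (a # u) =
     (case \<delta> q a of
        None \<Rightarrow> None
      | Some q' \<Rightarrow> (case seq_run \<delta> \<mu> q' u of
                     None \<Rightarrow> None
                   | Some (p, w) \<Rightarrow> Some (p, \<mu> q a @ w)))"

definition seq_transduction ::
  "'q \<Rightarrow> 'q set \<Rightarrow> ('q \<Rightarrow> 'a \<Rightarrow> 'q option) \<Rightarrow> ('q \<Rightarrow> 'a \<Rightarrow> 'g list)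
     \<Rightarrow> 'a list \<Rightarrow> 'g list option" where
  "seq_transduction q0 F \<delta> \<mu> u =
     (case seq_run \<delta> \<mu> q0 u of
        None \<Rightarrow> None
      | Some (p, w) \<Rightarrow> (if p \<in> F then Some w else None))"

definition regular_on :: "'c set \<Rightarrow> 'c list set \<Rightarrow> bool" where
  "regular_on A L \<longleftrightarrow>
     (\<exists>(Q::nat set) q0 F (\<delta>::nat \<Rightarrow> 'c \<Rightarrow> nat).
        finite Q \<and> q0 \<in> Q \<and> F \<subseteq> Q \<and>
        (\<forall>q\<in>Q. \<forall>c\<in>A. \<delta> q c \<in> Q) \<and>
        L = {u \<in> lists A. fold (\<lambda>c q. \<delta> q c) u q0 \<in> F})"

text \<open>A simple transduction over input alphabet A: f = sum of L_i |> w_i,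
  with pairwise disjoint regular L_i over A and |w_i| <= 1.\<close>

definition simple_transduction :: "'c set \<Rightarrow> ('c list \<Rightarrow> 'g list option) \<Rightarrow> bool" where
  "simple_transduction A f \<longleftrightarrow>
     (\<exists>(n::nat) (L :: nat \<Rightarrow> 'c list set) (w :: nat \<Rightarrow> 'g list).
        (\<forall>i<n. regular_on A (L i)) \<and>
        (\<forall>i<n. \<forall>j<n. i \<noteq> j \<longrightarrow> L i \<inter> L j = {}) \<and>
        (\<forall>i<n. length (w i) \<le> 1) \<and>
        (\<forall>i<n. \<forall>u\<in>L i. f u = Some (w i)) \<and>
        (\<forall>u. (\<forall>i<n. u \<notin> L i) \<longrightarrow> f u = None))"

definition ordered_alphabet :: "nat set \<Rightarrow> (nat \<times> nat) set \<Rightarrow> bool" where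
  "ordered_alphabet B R \<longleftrightarrow> finite B \<and> R \<subseteq> B \<times> B \<and> strict_linear_order_on B R"

text \<open>Extension of the order to B^n, most significant letter on the right.\<close>

definition lex_right :: "('b \<times> 'b) set \<Rightarrow> 'b list \<Rightarrow> 'b list \<Rightarrow> bool" where
  "lex_right R u v \<longleftrightarrow> length u = length v \<and>
     (\<exists>i<length u. (u ! i, v ! i) \<in> R \<and>
        (\<forall>j. i < j \<and> j < length u \<longrightarrow> u ! j = v ! j))"

definition words_of_length :: "'b set \<Rightarrow> nat \<Rightarrow> 'b list set" where
  "words_of_length B n = {b. length b = n \<and> set b \<subseteq> B}"

definition lex_enum :: "'b set \<Rightarrow> ('b \<times> 'b) set \<Rightarrow> nat \<Rightarrow> 'b list list" where
  "lex_enum B R n =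
     (THE bs. sorted_wrt (lex_right R) bs \<and> set bs = words_of_length B n)"

definition maplex ::
  "'b set \<Rightarrow> ('b \<times> 'b) set \<Rightarrow> (('a \<times> 'b) list \<Rightarrow> 'g list option)
     \<Rightarrow> 'a list \<Rightarrow> 'g list option" where
  "maplex B R f u =
     (let rs = map (\<lambda>b. f (zip u b)) (lex_enum B R (length u))
      in if None \<in> set rs then None else Some (concat (map the rs)))"

definition Lex1 :: "('a list \<Rightarrow> 'g list option) set" where
  "Lex1 = {g. \<exists>(B::nat set) R (f :: ('a \<times> nat) list \<Rightarrow> 'g list option).
              ordered_alphabet B R \<and>
              simple_transduction (UNIV \<times> B) f \<and>
              g = maplex B R f}"

end

theory Submission
  imports Defs
begin

lemma fold_in:
  assumes "\<forall>s\<in>S. \<forall>c\<in>A. st s c \<in> S" "s \<in> S" "x \<in> lists A"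
  shows "fold (\<lambda>c s. st s c) x s \<in> S"
  using assms(2,3) by (induction x arbitrary: s) (auto simp: assms(1))

lemma regular_from_dfa:
  fixes S :: "'s set"
  assumes fin: "finite S" and s0: "s0 \<in> S" and cl: "\<forall>s\<in>S. \<forall>c\<in>A. st s c \<in> S"
  shows "regular_on A {x \<in> lists A. fold (\<lambda>c s. st s c) x s0 \<in> Fs}"
proof -
  obtain h :: "'s \<Rightarrow> nat" and m where hm: "h ` S = {i. i < m}" "inj_on h S"
    using finite_imp_inj_to_nat_seg[OF fin] by blast
  define g where "g = inv_into S h"
  have gh: "\<And>s. s \<in> S \<Longrightarrow> g (h s) = s" using hm(2) by (simp add: g_def)
  define d where "d q c = h (st (g q) c)" for q c
  have key: "\<And>x s. s \<in> S \<Longrightarrow> x \<in> lists A \<Longrightarrow> fold (\<lambda>c q. d q c) x (h s) = h (fold (\<lambda>c s. st s c) x s)"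
  proof -
    fix x s show "s \<in> S \<Longrightarrow> x \<in> lists A \<Longrightarrow> fold (\<lambda>c q. d q c) x (h s) = h (fold (\<lambda>c s. st s c) x s)"
      by (induction x arbitrary: s) (auto simp: d_def gh cl)
  qed
  show ?thesis unfolding regular_on_def
  proof (intro exI conjI)
    show "finite (h ` S)" using fin by simp
    show "h s0 \<in> h ` S" using s0 by simp
    show "h ` (S \<inter> Fs) \<subseteq> h ` S" by auto
    show "\<forall>q\<in>h ` S. \<forall>c\<in>A. d q c \<in> h ` S" using cl gh by (auto simp: d_def)
    show "{x \<in> lists A. fold (\<lambda>c s. st s c) x s0 \<in> Fs} =
      {u \<in> lists A. fold (\<lambda>c q. d q c) u (h s0) \<in> h ` (S \<inter> Fs)}"
    proof (intro Collect_cong conj_cong refl)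
      fix u assume u: "u \<in> lists A"
      have inS: "fold (\<lambda>c s. st s c) u s0 \<in> S" using fold_in[OF cl s0 u] .
      show "(fold (\<lambda>c s. st s c) u s0 \<in> Fs) = (fold (\<lambda>c q. d q c) u (h s0) \<in> h ` (S \<inter> Fs))"
        unfolding key[OF s0 u] using inS hm(2) by (auto simp: inj_on_def)
    qed
  qed
qed

lemma simple_from_dfa:
  fixes S :: "'s set" and out :: "'s \<Rightarrow> 'g::finite list option"
  assumes fin: "finite S" and s0: "s0 \<in> S" and cl: "\<forall>s\<in>S. \<forall>c\<in>A. st s c \<in> S"
    and ol: "\<And>s w. out s = Some w \<Longrightarrow> length w \<le> 1"
  shows "simple_transduction A (\<lambda>w. if w \<in> lists A then out (fold (\<lambda>c s. st s c) w s0) else None)"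
proof -
  let ?V = "Some ` {xs :: 'g list. set xs \<subseteq> UNIV \<and> length xs \<le> 1}"
  have "finite ?V" using finite_lists_length_le[of "UNIV :: 'g set" 1] by simp
  then obtain vs where vs: "set vs = ?V" "distinct vs" using finite_distinct_list by blast
  define L where "L i = {x \<in> lists A. out (fold (\<lambda>c s. st s c) x s0) = vs ! i}" for i
  show ?thesis unfolding simple_transduction_def
  proof (intro exI[of _ "length vs"] exI[of _ L] exI[of _ "\<lambda>i. the (vs ! i)"] conjI allI impI ballI)
    fix i assume i: "i < length vs"
    show "regular_on A (L i)" unfolding L_def
      using regular_from_dfa[OF fin s0 cl, of "{s. out s = vs ! i}"] by simp
    show "length (the (vs ! i)) \<le> 1" using i vs(1) nth_mem[OF i] by auto
    fix u assume "u \<in> L i"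
    then show "(if u \<in> lists A then out (fold (\<lambda>c s. st s c) u s0) else None) = Some (the (vs ! i))"
      using i vs(1) nth_mem[OF i] by (auto simp: L_def)
  next
    fix i j assume "i < length vs" "j < length vs" "i \<noteq> j"
    then show "L i \<inter> L j = {}" using vs(2) by (auto simp: L_def nth_eq_iff_index_eq)
  next
    fix u assume nu: "\<forall>i<length vs. u \<notin> L i"
    show "(if u \<in> lists A then out (fold (\<lambda>c s. st s c) u s0) else None) = None"
    proof (cases "u \<in> lists A \<and> out (fold (\<lambda>c s. st s c) u s0) \<noteq> None")
      case True
      then obtain w where w: "out (fold (\<lambda>c s. st s c) u s0) = Some w" by auto
      then have "Some w \<in> set vs" using vs(1) ol[OF w] by auto
      then obtain i where "i < length vs" "vs ! i = Some w" by (auto simp: in_set_conv_nth)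
      then show ?thesis using nu True w by (auto simp: L_def)
    qed auto
  qed
qed

fun lenum :: "nat \<Rightarrow> nat \<Rightarrow> nat list list" where
  "lenum K 0 = [[]]"
| "lenum K (Suc n) = concat (map (\<lambda>k. map (\<lambda>v. v @ [k]) (lenum K n)) [0..<Suc K])"

definition RK :: "nat \<Rightarrow> (nat \<times> nat) set" where
  "RK K = {(x, y). x < y \<and> y \<le> K}"

lemma lenum_set: "set (lenum K n) = words_of_length {0..K} n"
proof (induction n)
  case 0 then show ?case by (auto simp: words_of_length_def)
next
  case (Suc n)
  show ?case
  proof
    show "set (lenum K (Suc n)) \<subseteq> words_of_length {0..K} (Suc n)"
    proof
      fix x assume "x \<in> set (lenum K (Suc n))"
      then obtain v k where "k \<le> K" "v \<in> set (lenum K n)" "x = v @ [k]" by auto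
      then show "x \<in> words_of_length {0..K} (Suc n)" using Suc by (simp add: words_of_length_def)
    qed
    show "words_of_length {0..K} (Suc n) \<subseteq> set (lenum K (Suc n))"
    proof
      fix b assume b: "b \<in> words_of_length {0..K} (Suc n)"
      obtain v k where vk: "b = v @ [k]" using b by (cases b rule: rev_cases) (auto simp: words_of_length_def)
      then have "v \<in> words_of_length {0..K} n" "k \<le> K" using b by (auto simp: words_of_length_def)
      then have "v \<in> set (lenum K n)" "k \<in> set [0..<Suc K]" using Suc by auto
      then show "b \<in> set (lenum K (Suc n))" using vk by auto
    qed
  qed
qed

lemma lenum_len: "v \<in> set (lenum K n) \<Longrightarrow> length v = n"
  using lenum_set by (auto simp: words_of_length_def)

lemma lex_right_snoc_same:
  assumes "length v = length w"
  shows "lex_right R (v @ [k]) (w @ [k]) \<longleftrightarrow> (k, k) \<in> R \<or> lex_right R v w"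
proof
  assume "lex_right R (v @ [k]) (w @ [k])"
  then obtain i where i: "i < Suc (length v)" "((v@[k]) ! i, (w@[k]) ! i) \<in> R"
    "\<forall>j. i < j \<and> j < Suc (length v) \<longrightarrow> (v@[k]) ! j = (w@[k]) ! j"
    by (auto simp: lex_right_def)
  show "(k, k) \<in> R \<or> lex_right R v w"
  proof (cases "i = length v")
    case True then show ?thesis using i assms by (simp add: nth_append)
  next
    case False
    then have "i < length v" using i by simp
    have "lex_right R v w" unfolding lex_right_def
    proof (intro conjI exI[of _ i])
      show "length v = length w" by (rule assms)
      show "i < length v" by fact
      show "(v ! i, w ! i) \<in> R" using i(2) \<open>i < length v\<close> assms by (simp add: nth_append)
      show "\<forall>j. i < j \<and> j < length v \<longrightarrow> v ! j = w ! j"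
      proof (intro allI impI)
        fix j assume j: "i < j \<and> j < length v"
        then have "(v@[k]) ! j = (w@[k]) ! j" using i(3) by simp
        then show "v ! j = w ! j" using j assms by (simp add: nth_append)
      qed
    qed
    then show ?thesis by simp
  qed
next
  assume "(k, k) \<in> R \<or> lex_right R v w"
  then show "lex_right R (v @ [k]) (w @ [k])"
  proof
    assume "(k,k) \<in> R" then show ?thesis using assms unfolding lex_right_def
      by (auto simp: nth_append intro!: exI[of _ "length v"])
  next
    assume "lex_right R v w"
    then obtain i where i: "i < length v" "(v ! i, w ! i) \<in> R"
      "\<forall>j. i < j \<and> j < length v \<longrightarrow> v ! j = w ! j" by (auto simp: lex_right_def)
    show ?thesis unfolding lex_right_def using assms i
      by (auto simp: nth_append less_Suc_eq intro!: exI[of _ i])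
  qed
qed

lemma lex_right_snoc_less:
  assumes "length v = length w" "(k, l) \<in> R"
  shows "lex_right R (v @ [k]) (w @ [l])"
  using assms unfolding lex_right_def by (auto simp: nth_append intro!: exI[of _ "length v"])

lemma sorted_wrt_concat_blocks:
  assumes "\<And>k. k \<in> set ks \<Longrightarrow> sorted_wrt P (g k)"
    and "sorted_wrt Q ks"
    and "\<And>k l x y. Q k l \<Longrightarrow> k \<in> set ks \<Longrightarrow> l \<in> set ks \<Longrightarrow> x \<in> set (g k) \<Longrightarrow> y \<in> set (g l) \<Longrightarrow> P x y"
  shows "sorted_wrt P (concat (map g ks))"
  using assms by (induction ks) (auto simp: sorted_wrt_append)

lemma lenum_sorted: "sorted_wrt (lex_right (RK K)) (lenum K n)"
proof (induction n)
  case 0 then show ?case by simp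
next
  case (Suc n)
  show ?case unfolding lenum.simps
  proof (rule sorted_wrt_concat_blocks[where Q = "(<)"])
    fix k show "sorted_wrt (lex_right (RK K)) (map (\<lambda>v. v @ [k]) (lenum K n))"
    proof -
      have "sorted_wrt (\<lambda>x y. lex_right (RK K) (x @ [k]) (y @ [k])) (lenum K n)"
      proof (rule sorted_wrt_mono_rel[OF _ Suc.IH])
        fix x y assume "x \<in> set (lenum K n)" "y \<in> set (lenum K n)" "lex_right (RK K) x y"
        then show "lex_right (RK K) (x @ [k]) (y @ [k])"
          using lex_right_snoc_same[of x y "RK K" k] lenum_len by metis
      qed
      then show ?thesis by (simp add: sorted_wrt_map)
    qed
  next
    show "sorted_wrt (<) [0..<Suc K]" by (rule sorted_wrt_upt)
  next
    fix k l x y assume "k < l" "k \<in> set [0..<Suc K]" "l \<in> set [0..<Suc K]" "x \<in> set (map (\<lambda>v. v @ [k]) (lenum K n))"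
      "y \<in> set (map (\<lambda>v. v @ [l]) (lenum K n))"
    then obtain v w where vw: "v \<in> set (lenum K n)" "w \<in> set (lenum K n)" "x = v @ [k]" "y = w @ [l]"
      by auto
    have "(k, l) \<in> RK K" using \<open>k < l\<close> \<open>l \<in> set [0..<Suc K]\<close> by (auto simp: RK_def)
    moreover have "length v = length w" using vw lenum_len by metis
    ultimately show "lex_right (RK K) x y" using vw lex_right_snoc_less by metis
  qed
qed

lemma sorted_unique:
  assumes "sorted_wrt P xs" "sorted_wrt P ys" "set xs = set ys"
    and irr: "\<And>x. \<not> P x x" and asym: "\<And>x y. P x y \<Longrightarrow> P y x \<Longrightarrow> False"
  shows "xs = ys"
  using assms(1-3)
proof (induction xs arbitrary: ys)
  case Nil then show ?case by simp
next
  case (Cons x xs)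
  then obtain y ys' where ys: "ys = y # ys'" by (cases ys) auto
  have P1: "\<forall>z\<in>set xs. P x z" using Cons.prems(1) by simp
  have P2: "\<forall>z\<in>set ys'. P y z" using Cons.prems(2) ys by simp
  have "x = y"
  proof (rule ccontr)
    assume ne: "x \<noteq> y"
    have "x \<in> set ys" using Cons.prems(3) by (metis list.set_intros(1))
    then have "x \<in> set ys'" using ne ys by simp
    have "y \<in> set (x # xs)" using Cons.prems(3) ys by (metis list.set_intros(1))
    then have "y \<in> set xs" using ne by simp
    show False using P1 P2 \<open>x \<in> set ys'\<close> \<open>y \<in> set xs\<close> asym by blast
  qed
  have nx: "x \<notin> set xs" using P1 irr by blast
  have ny: "y \<notin> set ys'" using P2 irr by blast
  have "set xs = set (x # xs) - {x}" using nx by auto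
  also have "\<dots> = set (y # ys') - {y}" using Cons.prems(3) ys \<open>x = y\<close> by simp
  also have "\<dots> = set ys'" using ny by auto
  finally have "set xs = set ys'" .
  moreover have "sorted_wrt P xs" using Cons.prems(1) by simp
  moreover have "sorted_wrt P ys'" using Cons.prems(2) ys by simp
  ultimately have "xs = ys'" using Cons.IH by blast
  then show ?case using ys \<open>x = y\<close> by simp
qed

lemma lex_right_RK_irr: "\<not> lex_right (RK K) v v"
  by (simp add: lex_right_def RK_def)

lemma lex_right_RK_asym: "lex_right (RK K) v w \<Longrightarrow> lex_right (RK K) w v \<Longrightarrow> False"
proof -
  assume a: "lex_right (RK K) v w" and b: "lex_right (RK K) w v"
  have R: "\<And>x y. (x, y) \<in> RK K \<Longrightarrow> x < y" by (simp add: RK_def)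
  from a obtain i where i0: "i < length v" "(v ! i, w ! i) \<in> RK K" "\<forall>j. i < j \<and> j < length v \<longrightarrow> v ! j = w ! j"
    unfolding lex_right_def by blast
  from b obtain i' where i'0: "i' < length w" "(w ! i', v ! i') \<in> RK K" "\<forall>j. i' < j \<and> j < length w \<longrightarrow> w ! j = v ! j"
    unfolding lex_right_def by blast
  have "length w = length v" using b unfolding lex_right_def by blast
  note i = i0(1) R[OF i0(2)] i0(3)
  note i' = i'0(1) R[OF i'0(2)] i'0(3)
  show False
  proof (cases i i' rule: linorder_cases)
    case less
    then have "v ! i' = w ! i'" using i(3) i'(1) \<open>length w = length v\<close> by simp
    then show ?thesis using i'(2) by simp
  next
    case equal then show ?thesis using i(2) i'(2) by simp
  next
    case greater
    then have "w ! i = v ! i" using i'(3) i(1) \<open>length w = length v\<close> by simp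
    then show ?thesis using i(2) by simp
  qed
qed

lemma lex_enum_eq: "lex_enum {0..K} (RK K) n = lenum K n"
  unfolding lex_enum_def
proof (rule the_equality)
  show "sorted_wrt (lex_right (RK K)) (lenum K n) \<and> set (lenum K n) = words_of_length {0..K} n"
    using lenum_sorted lenum_set by blast
  fix bs assume "sorted_wrt (lex_right (RK K)) bs \<and> set bs = words_of_length {0..K} n"
  then show "bs = lenum K n"
    using sorted_unique[of "lex_right (RK K)" bs "lenum K n"] lenum_sorted lenum_set
      lex_right_RK_irr lex_right_RK_asym by metis
qed

lemma lenum_distinct: "distinct (lenum K n)"
proof -
  have "\<And>xs. sorted_wrt (lex_right (RK K)) xs \<Longrightarrow> distinct xs"
  proof -
    fix xs show "sorted_wrt (lex_right (RK K)) xs \<Longrightarrow> distinct xs"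
      by (induction xs) (auto simp: lex_right_RK_irr)
  qed
  then show ?thesis using lenum_sorted by blast
qed

lemma ordered_RK: "ordered_alphabet {0..K} (RK K)"
  unfolding ordered_alphabet_def strict_linear_order_on_def
  by (auto simp: RK_def trans_def irrefl_def total_on_def)

definition lstep :: "('q \<Rightarrow> 'a \<Rightarrow> 'q option) \<Rightarrow> ('q \<Rightarrow> 'a \<Rightarrow> 'g list)
   \<Rightarrow> ('q option \<times> bool \<times> 'g option) \<Rightarrow> ('a \<times> nat) \<Rightarrow> ('q option \<times> bool \<times> 'g option)" where
  "lstep \<delta> \<mu> s x = (case s of (qo, z, c) \<Rightarrow> case x of (a, k) \<Rightarrow>
     (Option.bind qo (\<lambda>q. \<delta> q a), z \<and> k = 0,
      if k = 0 then c else (case qo of None \<Rightarrow> None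
        | Some q \<Rightarrow> if z \<and> k \<le> length (\<mu> q a) then Some (\<mu> q a ! (k - 1)) else None)))"

lemma lstep_simps:
  "fst (lstep \<delta> \<mu> (qo, z, c) (a, k)) = Option.bind qo (\<lambda>q. \<delta> q a)"
  "fst (snd (lstep \<delta> \<mu> (qo, z, c) (a, k))) = (z \<and> k = 0)"
  "snd (snd (lstep \<delta> \<mu> (qo, z, c) (a, 0))) = c"
  "k \<noteq> 0 \<Longrightarrow> snd (snd (lstep \<delta> \<mu> (Some q, z, c) (a, k))) =
      (if z \<and> k \<le> length (\<mu> q a) then Some (\<mu> q a ! (k - 1)) else None)"
  by (simp_all add: lstep_def)

lemma fold_fst:
  "length v = length x \<Longrightarrow>
   fst (fold (\<lambda>c s. lstep \<delta> \<mu> s c) (zip x v) (qo, z, c)) = Option.bind qo (\<lambda>q. map_option fst (seq_run \<delta> \<mu> q x))"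
proof (induction x arbitrary: v qo z c)
  case Nil then show ?case by (cases qo) auto
next
  case (Cons a x)
  then obtain k v' where v: "v = k # v'" "length v' = length x" by (cases v) auto
  obtain qo' z' c' where st: "lstep \<delta> \<mu> (qo, z, c) (a, k) = (qo', z', c')" by (cases "lstep \<delta> \<mu> (qo, z, c) (a, k)") auto
  have qo': "qo' = Option.bind qo (\<lambda>q. \<delta> q a)" using lstep_simps(1)[of \<delta> \<mu> qo z c a k] st by simp
  have "fst (fold (\<lambda>c s. lstep \<delta> \<mu> s c) (zip (a # x) v) (qo, z, c)) =
        fst (fold (\<lambda>c s. lstep \<delta> \<mu> s c) (zip x v') (qo', z', c'))" using v st by simp
  also have "\<dots> = Option.bind qo' (\<lambda>q. map_option fst (seq_run \<delta> \<mu> q x))" using Cons.IH v(2) by simp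
  also have "\<dots> = Option.bind qo (\<lambda>q. map_option fst (seq_run \<delta> \<mu> q (a # x)))"
    unfolding qo' by (cases qo) (auto split: option.split)
  finally show ?case .
qed

lemma fold_z:
  "length v = length x \<Longrightarrow>
   fst (snd (fold (\<lambda>c s. lstep \<delta> \<mu> s c) (zip x v) (qo, z, c))) = (z \<and> (\<forall>k\<in>set v. k = 0))"
proof (induction x arbitrary: v qo z c)
  case Nil then show ?case by simp
next
  case (Cons a x)
  then obtain k v' where v: "v = k # v'" "length v' = length x" by (cases v) auto
  obtain qo' z' c' where st: "lstep \<delta> \<mu> (qo, z, c) (a, k) = (qo', z', c')" by (cases "lstep \<delta> \<mu> (qo, z, c) (a, k)") auto
  have z': "z' = (z \<and> k = 0)" using lstep_simps(2)[of \<delta> \<mu> qo z c a k] st by simp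
  have "fst (snd (fold (\<lambda>c s. lstep \<delta> \<mu> s c) (zip (a # x) v) (qo, z, c))) =
        fst (snd (fold (\<lambda>c s. lstep \<delta> \<mu> s c) (zip x v') (qo', z', c')))" using v st by simp
  also have "\<dots> = (z' \<and> (\<forall>k\<in>set v'. k = 0))" using Cons.IH v(2) by simp
  finally show ?case using z' v by auto
qed

lemma fold_snoc:
  "length v = length x \<Longrightarrow>
   fold (\<lambda>c s. lstep \<delta> \<mu> s c) (zip (x @ [a]) (v @ [k])) s = lstep \<delta> \<mu> (fold (\<lambda>c s. lstep \<delta> \<mu> s c) (zip x v) s) (a, k)"
  by simp

lemma seq_run_append:
  "seq_run \<delta> \<mu> q (x @ y) = (case seq_run \<delta> \<mu> q x of None \<Rightarrow> None
     | Some (p, w) \<Rightarrow> (case seq_run \<delta> \<mu> p y of None \<Rightarrow> None | Some (p', w') \<Rightarrow> Some (p', w @ w')))"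
  by (induction x arbitrary: q) (auto split: option.split)

lemma seq_run_inQ:
  assumes cl: "\<forall>q\<in>Q. \<forall>a q'. \<delta> q a = Some q' \<longrightarrow> q' \<in> Q"
  shows "seq_run \<delta> \<mu> q x = Some (p, w) \<Longrightarrow> q \<in> Q \<Longrightarrow> p \<in> Q"
proof (induction x arbitrary: q w)
  case Nil then show ?case by simp
next
  case (Cons a x)
  then obtain q' w' where "\<delta> q a = Some q'" "seq_run \<delta> \<mu> q' x = Some (p, w')"
    by (auto split: option.splits)
  then show ?case using Cons cl by blast
qed

lemma concat_blocks:
  "concat (map E (concat (map (\<lambda>k. map (h k) L) ks))) = concat (map (\<lambda>k. concat (map (\<lambda>v. E (h k v)) L)) ks)"
  by (induction ks) (auto simp: comp_def)

lemma concat_single: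
  "distinct xs \<Longrightarrow> concat (map (\<lambda>v. if v = r then X else []) xs) = (if r \<in> set xs then X else [])"
  by (induction xs) auto

lemma concat_letters:
  "length m \<le> K \<Longrightarrow> concat (map (\<lambda>k. if k \<le> length m then [m ! (k - 1)] else []) [1..<Suc K]) = m"
proof (induction K arbitrary: m)
  case 0 then show ?case by simp
next
  case (Suc K)
  show ?case
  proof (cases "length m \<le> K")
    case True then show ?thesis using Suc by simp
  next
    case False
    then have lm: "length m = Suc K" using Suc.prems by simp
    then obtain m' c where m: "m = m' @ [c]" by (cases m rule: rev_cases) auto
    have lm': "length m' = K" using lm m by simp
    have "map (\<lambda>k. if k \<le> length m then [m ! (k - 1)] else []) [1..<Suc K] =
          map (\<lambda>k. if k \<le> length m' then [m' ! (k - 1)] else []) [1..<Suc K]"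
      using lm lm' m by (auto simp: nth_append)
    have up: "[1..<Suc (Suc K)] = [1..<Suc K] @ [Suc K]" by simp
    have "concat (map (\<lambda>k. if k \<le> length m then [m ! (k - 1)] else []) [1..<Suc (Suc K)]) =
      concat (map (\<lambda>k. if k \<le> length m' then [m' ! (k - 1)] else []) [1..<Suc K]) @ [m ! K]"
      unfolding up map_append concat_append \<open>map _ _ = _\<close> using lm by (simp del: upt_Suc)
    also have "\<dots> = m' @ [c]" using Suc.IH[of m'] lm' m by (simp add: nth_append)
    finally show ?thesis using m by simp
  qed
qed

lemma all_zero_iff: "length v = n \<Longrightarrow> (\<forall>k\<in>set v. k = (0::nat)) \<longleftrightarrow> v = replicate n 0"
  by (metis in_set_replicate replicate_length_same)

definition ell :: "('q \<Rightarrow> 'a \<Rightarrow> 'q option) \<Rightarrow> ('q \<Rightarrow> 'a \<Rightarrow> 'g list) \<Rightarrow> 'q \<Rightarrow> ('a \<times> nat) list \<Rightarrow> 'g list" where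
  "ell \<delta> \<mu> q0 y = (case snd (snd (fold (\<lambda>c s. lstep \<delta> \<mu> s c) y (Some q0, True, None))) of None \<Rightarrow> [] | Some g \<Rightarrow> [g])"

lemma main_concat:
  assumes cl: "\<forall>q\<in>Q. \<forall>a q'. \<delta> q a = Some q' \<longrightarrow> q' \<in> Q" and q0: "q0 \<in> Q"
    and bnd: "\<And>q a. q \<in> Q \<Longrightarrow> length (\<mu> q a) \<le> K"
  shows "seq_run \<delta> \<mu> q0 x = Some (p, w) \<Longrightarrow> concat (map (\<lambda>v. ell \<delta> \<mu> q0 (zip x v)) (lenum K (length x))) = w"
proof (induction x arbitrary: p w rule: rev_induct)
  case Nil then show ?case by (simp add: ell_def)
next
  case (snoc a x)
  let ?F = "\<lambda>y. fold (\<lambda>c s. lstep \<delta> \<mu> s c) y (Some q0, True, None)"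
  define n where "n = length x"
  from snoc.prems obtain p' w' where r: "seq_run \<delta> \<mu> q0 x = Some (p', w')" and
     d: "\<delta> p' a = Some p" and w: "w = w' @ \<mu> p' a"
    by (auto simp: seq_run_append split: option.splits)
  have p'Q: "p' \<in> Q" using seq_run_inQ[OF cl r q0] .
  have IH: "concat (map (\<lambda>v. ell \<delta> \<mu> q0 (zip x v)) (lenum K n)) = w'" using snoc.IH[OF r] n_def by simp
  have st: "\<exists>cc. ?F (zip x v) = (Some p', (\<forall>k\<in>set v. k = 0), cc)"
    if "v \<in> set (lenum K n)" for v
  proof -
    have lv: "length v = length x" using lenum_len that n_def by simp
    have f1: "fst (?F (zip x v)) = Some p'" using fold_fst[OF lv, of \<delta> \<mu> "Some q0" True None] r by simp
    have f2: "fst (snd (?F (zip x v))) = (\<forall>k\<in>set v. k = 0)" using fold_z[OF lv, of \<delta> \<mu> "Some q0" True None] by simp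
    show ?thesis by (intro exI[of _ "snd (snd (?F (zip x v)))"]) (simp add: prod_eq_iff f1 f2)
  qed
  have E0: "ell \<delta> \<mu> q0 (zip (x @ [a]) (v @ [0])) = ell \<delta> \<mu> q0 (zip x v)" if vin: "v \<in> set (lenum K n)" for v
  proof -
    have lv: "length v = length x" using lenum_len that n_def by simp
    obtain cc where cc: "?F (zip x v) = (Some p', (\<forall>k\<in>set v. k = 0), cc)" using st[OF vin] by blast
    show ?thesis unfolding ell_def fold_snoc[OF lv] cc lstep_simps(3) by simp
  qed
  have Ek: "ell \<delta> \<mu> q0 (zip (x @ [a]) (v @ [k])) =
      (if v = replicate n 0 then (if k \<le> length (\<mu> p' a) then [\<mu> p' a ! (k - 1)] else []) else [])"
    if vin: "v \<in> set (lenum K n)" and kn: "k \<noteq> 0" for v k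
  proof -
    have lv: "length v = length x" using lenum_len that n_def by simp
    obtain cc where cc: "?F (zip x v) = (Some p', (\<forall>k\<in>set v. k = 0), cc)" using st[OF vin] by blast
    have az: "(\<forall>k\<in>set v. k = 0) = (v = replicate n 0)" using all_zero_iff lv n_def by simp
    show ?thesis unfolding ell_def fold_snoc[OF lv] cc lstep_simps(4)[OF kn] az by simp
  qed
  have "set (replicate n (0::nat)) \<subseteq> {0..K}" by (induction n) auto
  then have rep: "replicate n 0 \<in> set (lenum K n)" by (simp add: lenum_set words_of_length_def)
  have cs: "concat (map (\<lambda>v. if v = replicate n 0 then XX else []) (lenum K n)) = XX" for XX
    using concat_single[OF lenum_distinct, of "replicate n 0" XX K n] rep by simp
  have "concat (map (\<lambda>v. ell \<delta> \<mu> q0 (zip (x @ [a]) v)) (lenum K (length (x @ [a])))) =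
    concat (map (\<lambda>k. concat (map (\<lambda>v. ell \<delta> \<mu> q0 (zip (x @ [a]) (v @ [k]))) (lenum K n))) [0..<Suc K])"
    by (simp only: length_append_singleton lenum.simps(2) concat_blocks n_def)
  also have "\<dots> = concat (map (\<lambda>v. ell \<delta> \<mu> q0 (zip x v)) (lenum K n)) @
      concat (map (\<lambda>k. if k \<le> length (\<mu> p' a) then [\<mu> p' a ! (k - 1)] else []) [1..<Suc K])"
  proof -
    have up: "[0..<Suc K] = 0 # [1..<Suc K]" by (simp add: upt_conv_Cons del: upt_Suc)
    have A: "map (\<lambda>v. ell \<delta> \<mu> q0 (zip (x @ [a]) (v @ [0]))) (lenum K n) = map (\<lambda>v. ell \<delta> \<mu> q0 (zip x v)) (lenum K n)"
      using E0 by simp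
    have B: "concat (map (\<lambda>v. ell \<delta> \<mu> q0 (zip (x @ [a]) (v @ [k]))) (lenum K n)) =
        (if k \<le> length (\<mu> p' a) then [\<mu> p' a ! (k - 1)] else [])" if "k \<in> set [1..<Suc K]" for k
    proof -
      have "map (\<lambda>v. ell \<delta> \<mu> q0 (zip (x @ [a]) (v @ [k]))) (lenum K n) =
          map (\<lambda>v. if v = replicate n 0 then (if k \<le> length (\<mu> p' a) then [\<mu> p' a ! (k - 1)] else []) else []) (lenum K n)"
      proof (rule map_cong[OF refl])
        have k0: "k \<noteq> 0" using that by auto
        fix v assume "v \<in> set (lenum K n)"
        then show "ell \<delta> \<mu> q0 (zip (x @ [a]) (v @ [k])) =
          (if v = replicate n 0 then (if k \<le> length (\<mu> p' a) then [\<mu> p' a ! (k - 1)] else []) else [])"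
          using Ek k0 by blast
      qed
      then have "concat (map (\<lambda>v. ell \<delta> \<mu> q0 (zip (x @ [a]) (v @ [k]))) (lenum K n)) =
          concat (map (\<lambda>v. if v = replicate n 0 then (if k \<le> length (\<mu> p' a) then [\<mu> p' a ! (k - 1)] else []) else []) (lenum K n))"
        by (rule arg_cong)
      also have "\<dots> = (if k \<le> length (\<mu> p' a) then [\<mu> p' a ! (k - 1)] else [])"
        by (rule cs)
      finally show ?thesis .
    qed
    have C: "map (\<lambda>k. concat (map (\<lambda>v. ell \<delta> \<mu> q0 (zip (x @ [a]) (v @ [k]))) (lenum K n))) [1..<Suc K] =
      map (\<lambda>k. if k \<le> length (\<mu> p' a) then [\<mu> p' a ! (k - 1)] else []) [1..<Suc K]"
      by (rule map_cong[OF refl]) (rule B)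
    show ?thesis by (simp only: up list.map(2) concat.simps(2) A C)
  qed
  also have "\<dots> = w" using IH concat_letters[OF bnd[OF p'Q]] w by simp
  finally show ?case .
qed

theorem mainTheorem7:
  fixes Q :: "'q set" and q0 :: 'q and F :: "'q set"
    and \<delta> :: "'q \<Rightarrow> 'a::finite \<Rightarrow> 'q option"
    and \<mu> :: "'q \<Rightarrow> 'a \<Rightarrow> 'g::finite list"
  assumes "seq_transducer Q q0 F \<delta>"
  shows "seq_transduction q0 F \<delta> \<mu> \<in> Lex1"
proof -
  have finQ: "finite Q" and q0: "q0 \<in> Q" and cl: "\<forall>q\<in>Q. \<forall>a q'. \<delta> q a = Some q' \<longrightarrow> q' \<in> Q"
    using assms by (auto simp: seq_transducer_def)
  define K where "K = Max (insert 0 ((\<lambda>(q, a). length (\<mu> q a)) ` (Q \<times> UNIV)))"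
  have bnd: "length (\<mu> q a) \<le> K" if "q \<in> Q" for q a
  proof -
    have "finite (Q \<times> (UNIV :: 'a set))" using finQ by simp
    then show ?thesis unfolding K_def using that by (intro Max_ge) force+
  qed
  define out :: "'q option \<times> bool \<times> 'g option \<Rightarrow> 'g list option" where
    "out s = (case s of (qo, z, c) \<Rightarrow> (case qo of None \<Rightarrow> None
        | Some p \<Rightarrow> if p \<in> F then Some (case c of None \<Rightarrow> [] | Some g \<Rightarrow> [g]) else None))" for s
  define f where "f w = (if w \<in> lists (UNIV \<times> {0..K}) then out (fold (\<lambda>c s. lstep \<delta> \<mu> s c) w (Some q0, True, None)) else None)" for w
  define S :: "('q option \<times> bool \<times> 'g option) set" where "S = insert None (Some ` Q) \<times> UNIV \<times> UNIV"
  have simp_f: "simple_transduction (UNIV \<times> {0..K}) f"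
    unfolding f_def
  proof (rule simple_from_dfa)
    show "finite S" using finQ by (simp add: S_def)
    show "(Some q0, True, None) \<in> S" using q0 by (simp add: S_def)
    show "\<forall>s\<in>S. \<forall>c\<in>UNIV \<times> {0..K}. lstep \<delta> \<mu> s c \<in> S"
      using cl by (auto simp: S_def lstep_def split: option.splits) (metis image_eqI option.exhaust)
    show "\<And>s w. out s = Some w \<Longrightarrow> length w \<le> 1"
      by (auto simp: out_def split: option.splits prod.splits if_splits)
  qed
  have eq: "seq_transduction q0 F \<delta> \<mu> = maplex {0..K} (RK K) f"
  proof
    fix u :: "'a list"
    define n where "n = length u"
    let ?F = "\<lambda>y. fold (\<lambda>c s. lstep \<delta> \<mu> s c) y (Some q0, True, None)"
    have fz: "f (zip u b) = out (?F (zip u b))" and fst1: "fst (?F (zip u b)) = map_option fst (seq_run \<delta> \<mu> q0 u)"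
      if "b \<in> set (lenum K n)" for b
    proof -
      have "set b \<subseteq> {0..K}" "length b = n" using that by (auto simp: lenum_set words_of_length_def)
      then have "zip u b \<in> lists (UNIV \<times> {0..K})" by (auto dest: set_zip_rightD)
      then show "f (zip u b) = out (?F (zip u b))" by (simp add: f_def)
      show "fst (?F (zip u b)) = map_option fst (seq_run \<delta> \<mu> q0 u)"
        using fold_fst[of b u \<delta> \<mu> "Some q0" True None] \<open>length b = n\<close> n_def by simp
    qed
    have "set (replicate n (0::nat)) \<subseteq> {0..K}" by (induction n) auto
    then have rep: "replicate n 0 \<in> set (lenum K n)" by (simp add: lenum_set words_of_length_def)
    have ml: "maplex {0..K} (RK K) f u =
      (let rs = map (\<lambda>b. out (?F (zip u b))) (lenum K n)
       in if None \<in> set rs then None else Some (concat (map the rs)))"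
      unfolding maplex_def lex_enum_eq n_def[symmetric] using fz by (simp cong: map_cong)
    show "seq_transduction q0 F \<delta> \<mu> u = maplex {0..K} (RK K) f u"
    proof (cases "\<exists>p w. seq_run \<delta> \<mu> q0 u = Some (p, w) \<and> p \<in> F")
      case True
      then obtain p w where r: "seq_run \<delta> \<mu> q0 u = Some (p, w)" and pF: "p \<in> F" by blast
      have o: "out (?F (zip u b)) = Some (ell \<delta> \<mu> q0 (zip u b))" if "b \<in> set (lenum K n)" for b
      proof -
        have "fst (?F (zip u b)) = Some p" using fst1[OF that] r by simp
        then show ?thesis using pF unfolding out_def ell_def
          by (cases "?F (zip u b)") (auto split: option.splits)
      qed
      have mapeq: "map (\<lambda>b. out (?F (zip u b))) (lenum K n) = map (\<lambda>b. Some (ell \<delta> \<mu> q0 (zip u b))) (lenum K n)"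
        using o by simp
      then have "maplex {0..K} (RK K) f u = Some (concat (map (\<lambda>b. ell \<delta> \<mu> q0 (zip u b)) (lenum K n)))"
        unfolding ml Let_def mapeq by (auto simp: comp_def)
      also have "\<dots> = Some w" using main_concat[OF cl q0 bnd r] n_def by simp
      finally show ?thesis using r pF by (simp add: seq_transduction_def)
    next
      case False
      have o: "out (?F (zip u b)) = None" if "b \<in> set (lenum K n)" for b
      proof -
        have "fst (?F (zip u b)) = map_option fst (seq_run \<delta> \<mu> q0 u)" using fst1[OF that] .
        then show ?thesis using False unfolding out_def
          by (cases "?F (zip u b)") (auto split: option.splits)
      qed
      have "None \<in> set (map (\<lambda>b. out (?F (zip u b))) (lenum K n))" using o[OF rep] rep by force
      then have "maplex {0..K} (RK K) f u = None" unfolding ml by simp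
      moreover have "seq_transduction q0 F \<delta> \<mu> u = None" using False
        by (auto simp: seq_transduction_def split: option.splits)
      ultimately show ?thesis by simp
    qed
  qed
  show ?thesis unfolding Lex1_def using ordered_RK simp_f eq by blast
qed

end
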